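(* Let $\Phi$ be any one of the three homomorphisms $\Psi,\Psi^+,\Psi^-:\mathsf{PGL}_2(\mathbb Z)\to\mathsf{PGL}_2(\mathbb C(q))$ defined by $\Phi(T)=\begin{bmatrix}q&1\\0&1\end{bmatrix}$ and $$\Psi(S)=\begin{bmatrix}0&-1\\ q&0\end{bmatrix},\ \Psi(V)=\begin{bmatrix}q&1-q\\ q-q^2&-q\end{bmatrix};\qquad \Psi^{\pm}(S)=\begin{bmatrix}1&q^{-1}\\ -q+\omega^{\pm1}&-1\end{bmatrix},\ \Psi^{\pm}(V)=\begin{bmatrix}1&\frac{1+q^{-1}}{q-\omega^{\pm1}}\\ 1-q&-1\end{bmatrix}.$$ Then there is no map $\psi:\mathsf P^1(\mathbb Z)\to\mathsf P^1(\mathbb C(q))$ satisfying $\psi(gx)=\Phi(g)\psi(x)$ for all $g\in\mathsf{PGL}_2(\mathbb Z)$ and $x\in\mathsf P^1(\mathbb Z)$. (Indeed $\psi(1)$ would have to be a fixed point of $\Phi(U)$, $U(x)=1/x$, and these fixed points involve $\sqrt{q^2-q+1}\notin\mathbb C(q)$.)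
   Context: $\omega=e^{2\pi i/6}$. An invertible matrix $\begin{bmatrix}a&b\\c&d\end{bmatrix}$ denotes the Möbius map $x\mapsto(ax+b)/(cx+d)$. In $\mathsf{PGL}_2(\mathbb Z)$: $T(x)=1+x$, $S(x)=-1/x$, $V(x)=-x$, which generate it; $\mathsf P^1(\mathbb Z)=\mathbb Q\cup\{\infty\}$ and $\mathsf P^1(\mathbb C(q))=\mathbb C(q)\cup\{\infty\}$ with Möbius actions. *)

theory Defs
  imports Complex_Main "HOL-Computational_Algebra.Polynomial" "HOL-Computational_Algebra.Fraction_Field"
begin

text \<open>2x2 matrices [a b; c d]\<close>
datatype 'a m2 = M2 'a 'a 'a 'a

fun m2mult :: "'a::comm_ring_1 m2 \<Rightarrow> 'a m2 \<Rightarrow> 'a m2" where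
  "m2mult (M2 a b c d) (M2 a' b' c' d') =
     M2 (a*a' + b*c') (a*b' + b*d') (c*a' + d*c') (c*b' + d*d')"

fun m2det :: "'a::comm_ring_1 m2 \<Rightarrow> 'a" where
  "m2det (M2 a b c d) = a*d - b*c"

fun m2smult :: "'a::comm_ring_1 \<Rightarrow> 'a m2 \<Rightarrow> 'a m2" where
  "m2smult k (M2 a b c d) = M2 (k*a) (k*b) (k*c) (k*d)"

fun m2map :: "('a \<Rightarrow> 'b) \<Rightarrow> 'a m2 \<Rightarrow> 'b m2" where
  "m2map f (M2 a b c d) = M2 (f a) (f b) (f c) (f d)"

text \<open>Two matrices represent the same element of PGL_2: they differ by a nonzero scalar.\<close>
definition proportional :: "'a::comm_ring_1 m2 \<Rightarrow> 'a m2 \<Rightarrow> bool" where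
  "proportional A B \<longleftrightarrow> (\<exists>k. k \<noteq> 0 \<and> A = m2smult k B)"

text \<open>Integer matrices with determinant \<plusminus>1 (representatives of PGL_2(Z)).\<close>
definition GL2Z :: "int m2 set" where
  "GL2Z = {A. m2det A = 1 \<or> m2det A = -1}"

datatype 'a p1 = Fin 'a | Infty

fun mob :: "'a::field m2 \<Rightarrow> 'a p1 \<Rightarrow> 'a p1" where
  "mob (M2 a b c d) Infty = (if c = 0 then Infty else Fin (a / c))"
| "mob (M2 a b c d) (Fin x) = (if c*x + d = 0 then Infty else Fin ((a*x + b) / (c*x + d)))"

type_synonym Cq = "complex poly fract"

definition cst :: "complex \<Rightarrow> Cq" where
  "cst c = Fract [:c:] 1"

definition qv :: Cq where
  "qv = Fract [:0, 1:] 1"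

definition omega :: complex where
  "omega = exp (2 * pi * \<i> / 6)"

definition Tm :: "int m2" where "Tm = M2 1 1 0 1"
definition Sm :: "int m2" where "Sm = M2 0 (-1) 1 0"
definition Vm :: "int m2" where "Vm = M2 (-1) 0 0 1"

definition PhiT :: "Cq m2" where "PhiT = M2 qv 1 0 1"

definition PsiS :: "Cq m2" where "PsiS = M2 0 (-1) qv 0"
definition PsiV :: "Cq m2" where "PsiV = M2 qv (1 - qv) (qv - qv^2) (- qv)"

text \<open>\<Psi>^\<plusminus> with w = \<omega>^{\<plusminus>1}\<close>
definition PsiPM_S :: "complex \<Rightarrow> Cq m2" where
  "PsiPM_S w = M2 1 (inverse qv) (- qv + cst w) (-1)"
definition PsiPM_V :: "complex \<Rightarrow> Cq m2" where
  "PsiPM_V w = M2 1 ((1 + inverse qv) / (qv - cst w)) (1 - qv) (-1)"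

text \<open>A homomorphism PGL_2(Z) \<rightarrow> PGL_2(C(q)), represented on matrix lifts.\<close>
definition pgl_hom :: "(int m2 \<Rightarrow> Cq m2) \<Rightarrow> bool" where
  "pgl_hom \<Phi> \<longleftrightarrow>
     (\<forall>A\<in>GL2Z. m2det (\<Phi> A) \<noteq> 0) \<and>
     (\<forall>A\<in>GL2Z. proportional (\<Phi> (m2smult (-1) A)) (\<Phi> A)) \<and>
     (\<forall>A\<in>GL2Z. \<forall>B\<in>GL2Z. proportional (\<Phi> (m2mult A B)) (m2mult (\<Phi> A) (\<Phi> B)))"

end

theory Submission
  imports Defs
begin

lemma two_ne: "(2::Cq) \<noteq> 0"
proof -
  have h: "(of_nat 2::Cq) = Fract (of_nat 2) 1" by (rule of_nat_fract)
  have "(2::Cq) = Fract 2 1" using h by simp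
  moreover have "Fract (2::complex poly) 1 \<noteq> 0" by (simp add: Zero_fract_def eq_fract)
  ultimately show ?thesis by simp
qed

lemma qv_ne: "qv \<noteq> 0" by (simp add: qv_def Zero_fract_def eq_fract)

lemma cst_add: "cst (a + b) = cst a + cst b" by (simp add: cst_def)
lemma cst_mult: "cst (a * b) = cst a * cst b" by (simp add: cst_def mult.commute)
lemma cst_diff: "cst (a - b) = cst a - cst b" by (simp add: cst_def)
lemma cst_1: "cst 1 = 1" by (simp add: cst_def One_fract_def one_pCons)
lemma cst_0: "cst 0 = 0" by (simp add: cst_def Zero_fract_def)
lemma cst_inj: "cst a = cst b \<longleftrightarrow> a = b" by (simp add: cst_def eq_fract)
lemma qv_cst_ne: "qv - cst w \<noteq> 0" by (simp add: qv_def cst_def Zero_fract_def eq_fract)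

lemma omega_eq: "omega = Complex (1/2) (sqrt 3 / 2)"
proof -
  have "2 * pi * \<i> / 6 = \<i> * complex_of_real (pi/3)" by (simp add: field_simps)
  then have "omega = cis (pi/3)" unfolding omega_def cis_conv_exp by simp
  then show ?thesis
    by (simp add: cos_60 sin_60 complex_eq_iff)
qed

lemma omega_rel: "omega^2 - omega + 1 = 0"
  by (simp add: omega_eq complex_eq_iff power2_eq_square field_simps)

lemma omega_inv_rel: "(inverse omega)^2 - inverse omega + 1 = 0"
proof -
  have "omega \<noteq> 0" by (simp add: omega_eq complex_eq_iff)
  then show ?thesis using omega_rel by (simp add: field_simps power2_eq_square)
qed

lemma F_factor: "[:1,-1,1:] = [:-omega,1:] * [:- cnj omega, 1:]"
  by (simp add: omega_eq complex_eq_iff field_simps)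

lemma order_F: "order omega [:1,-1,1:] = 1"
proof -
  have ne: "cnj omega \<noteq> omega" by (simp add: omega_eq complex_eq_iff)
  have "order omega ([:-omega,1:] * [:- cnj omega, 1:]) = order omega [:-omega,1:] + order omega [:- cnj omega, 1:]"
    by (rule order_mult) simp
  also have "order omega [:-omega,1:] = 1" using order_power_n_n[of omega 1] by simp
  also have "order omega [:- cnj omega, 1:] = 0" by (rule order_0I) (use ne in simp)
  finally show ?thesis using F_factor by simp
qed

lemma F_eq: "qv^2 - qv + 1 = Fract [:1,-1,1:] 1"
  by (simp add: qv_def power2_eq_square One_fract_def one_pCons)

lemma not_square: "\<not> (\<exists>y::Cq. y^2 = qv^2 - qv + 1)"
proof
  assume "\<exists>y::Cq. y^2 = qv^2 - qv + 1"
  then obtain y :: Cq where y: "y^2 = Fract [:1,-1,1:] 1" using F_eq by auto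
  obtain p r where yr: "y = Fract p r" and r: "r \<noteq> 0" by (cases y) auto
  from y yr r have eq: "p * p = [:1,-1,1:] * (r * r)"
    by (simp add: power2_eq_square eq_fract mult.commute)
  have F0: "[:1,-1,1::complex:] \<noteq> 0" by simp
  have rr: "[:1,-1,1::complex:] * (r * r) \<noteq> 0" using r F0 by (metis mult_eq_0_iff)
  then have pp: "p * p \<noteq> 0" using eq by simp
  have "order omega (p * p) = order omega p + order omega p" using pp by (rule order_mult)
  moreover have "order omega ([:1,-1,1:] * (r * r)) = 1 + (order omega r + order omega r)"
  proof -
    have "order omega ([:1,-1,1:] * (r * r)) = order omega [:1,-1,1:] + order omega (r * r)"
      using rr by (rule order_mult)
    moreover have "order omega (r * r) = order omega r + order omega r"
      using r by (intro order_mult) simp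
    ultimately show ?thesis using order_F by simp
  qed
  ultimately have "order omega p + order omega p = 1 + (order omega r + order omega r)" using eq by simp
  then show False by presburger
qed

lemma mob_smult: "k \<noteq> 0 \<Longrightarrow> mob (m2smult k A) P = mob A P"
  by (cases A; cases P) (auto simp: distrib_left[symmetric] mult.assoc)

lemma mult_smult: "m2mult (m2smult k A) (m2smult l B) = m2smult (k*l) (m2mult A B)"
  by (cases A; cases B) (simp add: algebra_simps)

lemma fix_disc:
  fixes a b c d :: "'a::field"
  assumes c: "c \<noteq> 0" and fx: "mob (M2 a b c d) P = P"
  shows "\<exists>y. y^2 = (d-a)^2 + 4*b*c"
proof (cases P)
  case Infty
  then show ?thesis using fx c by simp
next
  case (Fin x)
  with fx have n: "c*x + d \<noteq> 0" and e: "(a*x+b)/(c*x+d) = x" by (auto split: if_splits)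
  from e n have "a*x + b = x*(c*x+d)" by (simp add: field_simps)
  then have "(2*c*x + d - a)^2 = (d-a)^2 + 4*b*c" by algebra
  then show ?thesis by blast
qed

lemma sq_div: "(z::Cq) \<noteq> 0 \<Longrightarrow> y^2 = z^2 * f \<Longrightarrow> (y/z)^2 = f"
  by (simp add: power_divide)

lemma noFixA: "mob (m2mult PsiV PsiS) P \<noteq> P"
proof
  assume fx: "mob (m2mult PsiV PsiS) P = P"
  define q where "q = qv"
  have q0: "q \<noteq> 0" using qv_ne q_def by simp
  have M: "m2mult PsiV PsiS = M2 ((1-q)*q) (-q) (-q*q) (q^2 - q)"
    by (simp add: PsiV_def PsiS_def q_def)
  have c: "-q*q \<noteq> 0" using q0 by simp
  obtain y where y: "y^2 = ((q^2 - q) - (1-q)*q)^2 + 4*(-q)*(-q*q)"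
    using fix_disc[OF c fx[unfolded M]] by blast
  have y': "y^2 = (2*q)^2 * (q^2 - q + 1)" using y by algebra
  have "2*q \<noteq> 0" using q0 two_ne by simp
  from sq_div[OF this y'] have "(y/(2*q))^2 = q^2 - q + 1" .
  then show False using not_square q_def by blast
qed

lemma cst_pow2: "cst (w^2) = (cst w)^2"
  by (simp add: power2_eq_square cst_mult)

lemma noFixB:
  assumes w: "w \<in> {omega, inverse omega}"
  shows "mob (m2mult (PsiPM_V w) (PsiPM_S w)) P \<noteq> P"
proof
  assume fx: "mob (m2mult (PsiPM_V w) (PsiPM_S w)) P = P"
  define q where "q = qv"
  define W where "W = cst w"
  have rel0: "w^2 - w + 1 = 0" using w omega_rel omega_inv_rel by auto
  have rel: "W^2 - W + 1 = 0"
    using arg_cong[OF rel0, of cst] by (simp add: W_def cst_diff cst_add cst_pow2 cst_1 cst_0)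
  have w0: "w \<noteq> 0" "w \<noteq> 1" using rel0 by auto
  have W0: "W \<noteq> 0" "1 - W \<noteq> 0" using w0 cst_inj[of w 0] cst_inj[of 1 w] cst_0 cst_1 W_def by auto
  have q0: "q \<noteq> 0" using qv_ne q_def by simp
  have qW: "q - W \<noteq> 0" using qv_cst_ne q_def W_def by simp
  define iq where "iq = inverse q"
  define X where "X = (1 + iq) / (q - W)"
  have M: "m2mult (PsiPM_V w) (PsiPM_S w) =
     M2 (1 + X * (- q + W)) (iq + X * (-1)) ((1 - q) + (-1) * (- q + W)) ((1-q) * iq + (-1)*(-1))"
    by (simp add: PsiPM_V_def PsiPM_S_def q_def W_def X_def iq_def)
  have c: "(1 - q) + (-1) * (- q + W) \<noteq> 0" using W0 by simp
  obtain y where y: "y^2 = (((1-q) * iq + (-1)*(-1)) - (1 + X * (- q + W)))^2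
      + 4*(iq + X * (-1))*((1 - q) + (-1) * (- q + W))"
    using fix_disc[OF c fx[unfolded M]] by blast
  have e1: "iq * q = 1" using q0 iq_def by simp
  have e2: "X * (q - W) = 1 + iq" using qW X_def by simp
  have e3: "(iq - X) * (q * (q-W)) = -(W+1)" using e1 e2 by algebra
  have yd: "y^2 = (2*iq)^2 + 4*(iq - X)*(1-W)" using y e1 e2 by algebra
  have key: "y^2 = (2*W/(q*(q-W)))^2 * (q^2 - q + 1)"
  proof -
    have "y^2 * (q*(q-W))^2 = (2*W)^2 * (q^2 - q + 1)" using yd e1 e3 rel by algebra
    then show ?thesis using q0 qW by (simp add: power_divide field_simps)
  qed
  have "2*W/(q*(q-W)) \<noteq> 0" using two_ne W0 q0 qW by simp
  from sq_div[OF this key] have "(y/(2*W/(q*(q-W))))^2 = q^2 - q + 1" .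
  then show False using not_square q_def by blast
qed

lemma prop_mob: "proportional A B \<Longrightarrow> mob A P = mob B P"
  unfolding proportional_def using mob_smult by blast

theorem mainTheorem6:
  fixes \<Phi> :: "int m2 \<Rightarrow> Cq m2"
  assumes hom: "pgl_hom \<Phi>"
    and T: "proportional (\<Phi> Tm) PhiT"
    and SV: "(proportional (\<Phi> Sm) PsiS \<and> proportional (\<Phi> Vm) PsiV) \<or>
             (\<exists>w\<in>{omega, inverse omega}.
                proportional (\<Phi> Sm) (PsiPM_S w) \<and> proportional (\<Phi> Vm) (PsiPM_V w))"
  shows "\<not> (\<exists>\<psi> :: rat p1 \<Rightarrow> Cq p1.
             \<forall>g\<in>GL2Z. \<forall>x. \<psi> (mob (m2map of_int g) x) = mob (\<Phi> g) (\<psi> x))"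
proof
  assume "\<exists>\<psi> :: rat p1 \<Rightarrow> Cq p1.
             \<forall>g\<in>GL2Z. \<forall>x. \<psi> (mob (m2map of_int g) x) = mob (\<Phi> g) (\<psi> x)"
  then obtain \<psi> :: "rat p1 \<Rightarrow> Cq p1" where
    psi: "\<forall>g\<in>GL2Z. \<forall>x. \<psi> (mob (m2map of_int g) x) = mob (\<Phi> g) (\<psi> x)" by blast
  have V: "Vm \<in> GL2Z" and S: "Sm \<in> GL2Z" by (simp_all add: GL2Z_def Vm_def Sm_def)
  define U where "U = m2mult Vm Sm"
  have U: "U \<in> GL2Z" and U1: "mob (m2map of_int U) (Fin 1) = Fin (1::rat)"
    by (simp_all add: GL2Z_def U_def Vm_def Sm_def)
  have pU: "proportional (\<Phi> U) (m2mult (\<Phi> Vm) (\<Phi> Sm))"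
    using hom V S unfolding pgl_hom_def U_def by blast
  define P where "P = \<psi> (Fin 1)"
  have fx: "mob (\<Phi> U) P = P" using psi U U1 unfolding P_def by metis
  have fx2: "mob (m2mult (\<Phi> Vm) (\<Phi> Sm)) P = P" using fx prop_mob[OF pU] by simp
  have pm: "proportional A B \<Longrightarrow> proportional C D \<Longrightarrow> proportional (m2mult A C) (m2mult B D)" for A B C D :: "Cq m2"
    unfolding proportional_def using mult_smult by (metis mult_eq_0_iff)
  from SV show False
  proof
    assume "proportional (\<Phi> Sm) PsiS \<and> proportional (\<Phi> Vm) PsiV"
    then have "proportional (m2mult (\<Phi> Vm) (\<Phi> Sm)) (m2mult PsiV PsiS)" using pm by blast
    then show False using fx2 prop_mob noFixA by metis
  next
    assume "\<exists>w\<in>{omega, inverse omega}.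
                proportional (\<Phi> Sm) (PsiPM_S w) \<and> proportional (\<Phi> Vm) (PsiPM_V w)"
    then obtain w where w: "w \<in> {omega, inverse omega}" and
      h: "proportional (\<Phi> Sm) (PsiPM_S w)" "proportional (\<Phi> Vm) (PsiPM_V w)" by blast
    then have "proportional (m2mult (\<Phi> Vm) (\<Phi> Sm)) (m2mult (PsiPM_V w) (PsiPM_S w))" using pm by blast
    then show False using fx2 prop_mob noFixB[OF w] by metis
  qed
qed

end
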